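(* For any quasi-PL space $\mathcal{F}$, the underlying simplicial set $\mathcal{F}_\bullet$ is a Kan complex.
   Context: $\mathbf{PL}$ is the category of PL spaces and PL maps. A quasi-PL space is a functor $\mathcal{F}:\mathbf{PL}^{op}\to\mathbf{Sets}$ that is a sheaf for open covers and such that, for every PL space $P$ and every locally finite cover $\{Q_i\}$ of $P$ by closed PL subspaces, $\mathcal{F}(P)\to\prod_i\mathcal{F}(Q_i)\rightrightarrows\prod_{i,j}\mathcal{F}(Q_i\cap Q_j)$ is an equalizer. The underlying simplicial set $\mathcal{F}_\bullet$ is the composite of $\mathcal{F}$ with the functor $\Delta\to\mathbf{PL}$ sending $[p]$ to the geometric simplex $\Delta^p$ (the convex hull of the standard basis of $\mathbb{R}^{p+1}$) and an order-preserving map to the induced linear map. Thus $\mathcal{F}_p=\mathcal{F}(\Delta^p)$. *)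

theory Defs
  imports "HOL-Analysis.Analysis"
begin

text \<open>Points of the ambient space: finitely supported real sequences (R^infinity);
every PL space lives in some R^N = {x. \<forall>i\<ge>N. x i = 0}.  The topology is the
product topology, which restricts to the Euclidean topology on each R^N.\<close>

type_synonym pt = "nat \<Rightarrow> real"

definition comb :: "pt set \<Rightarrow> (pt \<Rightarrow> real) \<Rightarrow> pt" where
  "comb V t = (\<lambda>i. \<Sum>v\<in>V. t v * v i)"

definition convex_weights :: "pt set \<Rightarrow> (pt \<Rightarrow> real) \<Rightarrow> bool" where
  "convex_weights V t \<longleftrightarrow> (\<forall>v\<in>V. 0 \<le> t v) \<and> (\<Sum>v\<in>V. t v) = 1"

definition hull_pts :: "pt set \<Rightarrow> pt set" where
  "hull_pts V = {comb V t | t. convex_weights V t}"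

definition locally_finite_in :: "pt set \<Rightarrow> pt set set \<Rightarrow> bool" where
  "locally_finite_in P K \<longleftrightarrow>
     (\<forall>x\<in>P. \<exists>U. open U \<and> x \<in> U \<and> finite {C\<in>K. C \<inter> U \<noteq> {}})"

definition polytope_cover :: "pt set \<Rightarrow> pt set set \<Rightarrow> bool" where
  "polytope_cover P K \<longleftrightarrow>
     (\<forall>C\<in>K. \<exists>V. finite V \<and> C = hull_pts V) \<and> \<Union>K = P \<and> locally_finite_in P K"

definition pl_space :: "pt set \<Rightarrow> bool" where
  "pl_space P \<longleftrightarrow> (\<exists>N. \<forall>x\<in>P. \<forall>i\<ge>N. x i = 0) \<and> (\<exists>K. polytope_cover P K)"

definition pl_map :: "pt set \<Rightarrow> pt set \<Rightarrow> (pt \<Rightarrow> pt) \<Rightarrow> bool" where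
  "pl_map P Q f \<longleftrightarrow> pl_space P \<and> pl_space Q \<and> f ` P \<subseteq> Q \<and> continuous_on P f \<and>
     (\<exists>K. polytope_cover P K \<and>
        (\<forall>C\<in>K. \<exists>V. finite V \<and> C = hull_pts V \<and>
           (\<forall>t. convex_weights V t \<longrightarrow> f (comb V t) = (\<lambda>i. \<Sum>v\<in>V. t v * f v i))))"

text \<open>A presheaf F : PL^op \<rightarrow> Sets, given by its object part Fo and its action
Fm P Q f : Fo Q \<rightarrow> Fo P on a PL map f : P \<rightarrow> Q (depending only on f restricted to P).\<close>
definition presheaf :: "(pt set \<Rightarrow> 'a set) \<Rightarrow> (pt set \<Rightarrow> pt set \<Rightarrow> (pt \<Rightarrow> pt) \<Rightarrow> 'a \<Rightarrow> 'a) \<Rightarrow> bool" where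
  "presheaf Fo Fm \<longleftrightarrow>
     (\<forall>P Q f. pl_map P Q f \<longrightarrow> (\<forall>x\<in>Fo Q. Fm P Q f x \<in> Fo P)) \<and>
     (\<forall>P Q f g. pl_map P Q f \<and> (\<forall>x\<in>P. f x = g x) \<longrightarrow> (\<forall>y\<in>Fo Q. Fm P Q f y = Fm P Q g y)) \<and>
     (\<forall>P. pl_space P \<longrightarrow> (\<forall>x\<in>Fo P. Fm P P id x = x)) \<and>
     (\<forall>P Q R f g. pl_map P Q f \<and> pl_map Q R g \<longrightarrow>
        (\<forall>x\<in>Fo R. Fm P R (g \<circ> f) x = Fm P Q f (Fm Q R g x)))"

definition restr :: "(pt set \<Rightarrow> pt set \<Rightarrow> (pt \<Rightarrow> pt) \<Rightarrow> 'a \<Rightarrow> 'a) \<Rightarrow> pt set \<Rightarrow> pt set \<Rightarrow> 'a \<Rightarrow> 'a" where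
  "restr Fm A B = Fm A B id"

text \<open>F(P) \<rightarrow> \<Prod> F(C) \<rightrightarrows> \<Prod> F(C \<inter> D) is an equalizer.\<close>
definition equalizer_cond :: "(pt set \<Rightarrow> 'a set) \<Rightarrow> (pt set \<Rightarrow> pt set \<Rightarrow> (pt \<Rightarrow> pt) \<Rightarrow> 'a \<Rightarrow> 'a)
    \<Rightarrow> pt set \<Rightarrow> pt set set \<Rightarrow> bool" where
  "equalizer_cond Fo Fm P \<C> \<longleftrightarrow>
     (\<forall>s\<in>Fo P. \<forall>s'\<in>Fo P. (\<forall>C\<in>\<C>. restr Fm C P s = restr Fm C P s') \<longrightarrow> s = s') \<and>
     (\<forall>\<sigma>. (\<forall>C\<in>\<C>. \<sigma> C \<in> Fo C) \<and>
          (\<forall>C\<in>\<C>. \<forall>D\<in>\<C>. restr Fm (C \<inter> D) C (\<sigma> C) = restr Fm (C \<inter> D) D (\<sigma> D))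
        \<longrightarrow> (\<exists>s\<in>Fo P. \<forall>C\<in>\<C>. restr Fm C P s = \<sigma> C))"

definition quasi_pl_space :: "(pt set \<Rightarrow> 'a set) \<Rightarrow> (pt set \<Rightarrow> pt set \<Rightarrow> (pt \<Rightarrow> pt) \<Rightarrow> 'a \<Rightarrow> 'a) \<Rightarrow> bool" where
  "quasi_pl_space Fo Fm \<longleftrightarrow> presheaf Fo Fm \<and>
     (\<forall>P \<U>. pl_space P \<and> (\<forall>U\<in>\<U>. openin (top_of_set P) U) \<and> \<Union>\<U> = P
        \<longrightarrow> equalizer_cond Fo Fm P \<U>) \<and>
     (\<forall>P \<C>. pl_space P \<and> (\<forall>C\<in>\<C>. closedin (top_of_set P) C \<and> pl_space C) \<and> \<Union>\<C> = P
          \<and> locally_finite_in P \<C>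
        \<longrightarrow> equalizer_cond Fo Fm P \<C>)"

definition std_simplex :: "nat \<Rightarrow> pt set" where
  "std_simplex p = {x. (\<forall>i. 0 \<le> x i) \<and> (\<forall>i>p. x i = 0) \<and> (\<Sum>i\<le>p. x i) = 1}"

text \<open>Linear map \<Delta>^m \<rightarrow> \<Delta>^n induced by \<theta> : [m] \<rightarrow> [n] (e_k \<mapsto> e_{\<theta> k}).\<close>
definition simplex_map :: "(nat \<Rightarrow> nat) \<Rightarrow> nat \<Rightarrow> pt \<Rightarrow> pt" where
  "simplex_map \<theta> m x = (\<lambda>j. \<Sum>k\<le>m. if \<theta> k = j then x k else 0)"

definition sset_obj :: "(pt set \<Rightarrow> 'a set) \<Rightarrow> nat \<Rightarrow> 'a set" where
  "sset_obj Fo p = Fo (std_simplex p)"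

definition sset_op :: "(pt set \<Rightarrow> pt set \<Rightarrow> (pt \<Rightarrow> pt) \<Rightarrow> 'a \<Rightarrow> 'a)
    \<Rightarrow> (nat \<Rightarrow> nat) \<Rightarrow> nat \<Rightarrow> nat \<Rightarrow> 'a \<Rightarrow> 'a" where
  "sset_op Fm \<theta> m n = Fm (std_simplex m) (std_simplex n) (simplex_map \<theta> m)"

definition coface :: "nat \<Rightarrow> nat \<Rightarrow> nat" where
  "coface i j = (if j < i then j else Suc j)"

text \<open>Kan condition: every horn \<Lambda>^n_k \<rightarrow> X (a compatible family of (n-1)-simplices
x_i, i \<noteq> k, with d_i x_j = d_{j-1} x_i for i < j) extends to an n-simplex.\<close>
definition kan_complex :: "(nat \<Rightarrow> 'a set) \<Rightarrow> ((nat \<Rightarrow> nat) \<Rightarrow> nat \<Rightarrow> nat \<Rightarrow> 'a \<Rightarrow> 'a) \<Rightarrow> bool" where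
  "kan_complex X op \<longleftrightarrow>
     (\<forall>n k x. 1 \<le> n \<and> k \<le> n \<and>
        (\<forall>i\<le>n. i \<noteq> k \<longrightarrow> x i \<in> X (n - 1)) \<and>
        (\<forall>i j. i < j \<and> j \<le> n \<and> i \<noteq> k \<and> j \<noteq> k \<longrightarrow>
            op (coface i) (n - 2) (n - 1) (x j) = op (coface (j - 1)) (n - 2) (n - 1) (x i))
      \<longrightarrow> (\<exists>y\<in>X n. \<forall>i\<le>n. i \<noteq> k \<longrightarrow> op (coface i) (n - 1) n y = x i))"

end

theory Submission
  imports Defs
begin


definition ev :: "nat \<Rightarrow> pt" where "ev l = (\<lambda>i. if i = l then 1 else 0)"

definition sface :: "nat set \<Rightarrow> pt set" where
  "sface S = {x. (\<forall>i. 0 \<le> x i) \<and> (\<forall>i. i \<notin> S \<longrightarrow> x i = 0) \<and> sum x S = 1}"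

lemma inj_ev: "inj ev"
  by (rule injI) (metis ev_def zero_neq_one)

lemma comb_ev:
  assumes "finite S"
  shows "comb (ev ` S) t = (\<lambda>i. if i \<in> S then t (ev i) else 0)"
proof
  fix i
  have "comb (ev ` S) t i = (\<Sum>l\<in>S. t (ev l) * ev l i)"
    unfolding comb_def by (subst sum.reindex) (auto intro: inj_on_subset[OF inj_ev])
  also have "\<dots> = (\<Sum>l\<in>S. if l = i then t (ev i) else 0)"
    by (rule sum.cong) (auto simp: ev_def)
  also have "\<dots> = (if i \<in> S then t (ev i) else 0)"
    using assms by simp
  finally show "comb (ev ` S) t i = (if i \<in> S then t (ev i) else 0)" .
qed

lemma hull_ev:
  assumes "finite S"
  shows "hull_pts (ev ` S) = sface S"
proof
  show "hull_pts (ev ` S) \<subseteq> sface S"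
  proof
    fix x assume "x \<in> hull_pts (ev ` S)"
    then obtain t where x: "x = comb (ev ` S) t" and t: "convex_weights (ev ` S) t"
      unfolding hull_pts_def by auto
    have xe: "x = (\<lambda>i. if i \<in> S then t (ev i) else 0)" using x comb_ev[OF assms] by simp
    have "sum x S = (\<Sum>l\<in>S. t (ev l))" by (simp add: xe)
    also have "\<dots> = (\<Sum>v\<in>ev ` S. t v)"
      by (subst sum.reindex) (auto intro: inj_on_subset[OF inj_ev])
    also have "\<dots> = 1" using t unfolding convex_weights_def by simp
    finally show "x \<in> sface S" using t unfolding sface_def convex_weights_def xe by auto
  qed
next
  show "sface S \<subseteq> hull_pts (ev ` S)"
  proof
    fix x assume x: "x \<in> sface S"
    define t where "t v = (\<Sum>l\<in>S. v l * x l)" for v :: pt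
    have tev: "t (ev i) = (if i \<in> S then x i else 0)" for i
    proof -
      have "t (ev i) = (\<Sum>l\<in>S. if l = i then x i else 0)"
        unfolding t_def ev_def by (rule sum.cong) auto
      then show ?thesis using assms by simp
    qed
    have "x = comb (ev ` S) t"
      using x by (auto simp: comb_ev[OF assms] tev sface_def)
    moreover have "convex_weights (ev ` S) t"
    proof -
      have "(\<Sum>v\<in>ev ` S. t v) = (\<Sum>l\<in>S. t (ev l))"
        by (subst sum.reindex) (auto intro: inj_on_subset[OF inj_ev])
      also have "\<dots> = sum x S" by (rule sum.cong) (auto simp: tev)
      finally show ?thesis using x unfolding convex_weights_def sface_def by (auto simp: tev)
    qed
    ultimately show "x \<in> hull_pts (ev ` S)" unfolding hull_pts_def by auto
  qed
qed

lemma pl_space_sface: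
  assumes "finite S"
  shows "pl_space (sface S)"
proof -
  obtain N where N: "\<forall>i\<in>S. i < N" using finite_nat_bounded[OF assms] by auto
  have nS: "i \<notin> S" if "i \<ge> N" for i using N that by auto
  have "\<forall>x\<in>sface S. \<forall>i\<ge>N. x i = 0" using nS unfolding sface_def by blast
  moreover have "polytope_cover (sface S) {sface S}"
    unfolding polytope_cover_def locally_finite_in_def
  proof (intro conjI ballI)
    fix C assume "C \<in> {sface S}"
    then show "\<exists>V. finite V \<and> C = hull_pts V" using hull_ev[OF assms] assms by auto
  next
    fix x show "\<exists>U. open U \<and> x \<in> U \<and> finite {C \<in> {sface S}. C \<inter> U \<noteq> {}}"
      by (rule exI[of _ UNIV]) auto
  qed auto
  ultimately show ?thesis unfolding pl_space_def by blast
qed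

lemma std_simplex_sface: "std_simplex p = sface {..p}"
  unfolding std_simplex_def sface_def by auto

lemma cont_coord [continuous_intros]: "continuous_on S (\<lambda>x::pt. x i)"
  by (rule continuous_on_subset[OF continuous_on_product_coordinates]) auto

lemma pl_map_affine:
  assumes "pl_space P" "pl_space Q" "f ` P \<subseteq> Q" "continuous_on P f"
    and aff: "\<And>V t. finite V \<Longrightarrow> f (comb V t) = (\<lambda>i. \<Sum>v\<in>V. t v * f v i)"
  shows "pl_map P Q f"
proof -
  obtain K where K: "polytope_cover P K" using assms(1) unfolding pl_space_def by blast
  have "\<forall>C\<in>K. \<exists>V. finite V \<and> C = hull_pts V \<and>
           (\<forall>t. convex_weights V t \<longrightarrow> f (comb V t) = (\<lambda>i. \<Sum>v\<in>V. t v * f v i))"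
    using K aff unfolding polytope_cover_def by blast
  with K assms show ?thesis unfolding pl_map_def by blast
qed

definition cinv :: "nat \<Rightarrow> nat \<Rightarrow> nat" where "cinv a j = (if j < a then j else j - 1)"

lemma coface_eq_iff: "coface a l = j \<longleftrightarrow> j \<noteq> a \<and> l = cinv a j"
  unfolding coface_def cinv_def by auto

lemma sm_coface:
  "simplex_map (coface a) m x j = (if j \<noteq> a \<and> cinv a j \<le> m then x (cinv a j) else 0)"
proof -
  have "simplex_map (coface a) m x j = (\<Sum>l\<le>m. if l = cinv a j then (if j \<noteq> a then x (cinv a j) else 0) else 0)"
    unfolding simplex_map_def by (rule sum.cong) (auto simp: coface_eq_iff)
  also have "\<dots> = (if j \<noteq> a \<and> cinv a j \<le> m then x (cinv a j) else 0)"
    by (simp only: sum.delta finite_atMost) auto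
  finally show ?thesis .
qed

lemma cinv_coface [simp]: "cinv a (coface a l) = l"
  unfolding cinv_def coface_def by auto

lemma coface_ne [simp]: "coface a l \<noteq> a"
  unfolding coface_def by auto

lemma coface_cinv: "j \<noteq> a \<Longrightarrow> coface a (cinv a j) = j"
  unfolding cinv_def coface_def by auto

lemma sm_del:
  assumes "y a = 0" "\<forall>l>Suc m. y l = 0" "a \<le> Suc m"
  shows "simplex_map (coface a) m (y \<circ> coface a) = y"
proof
  fix j
  show "simplex_map (coface a) m (y \<circ> coface a) j = y j"
  proof (cases "j = a")
    case True then show ?thesis using assms by (simp add: sm_coface)
  next
    case False
    then have "cinv a j > m \<Longrightarrow> j > Suc m" using assms(3) unfolding cinv_def by (auto split: if_splits)
    then show ?thesis using False assms by (auto simp: sm_coface coface_cinv)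
  qed
qed

lemma del_sm:
  assumes "\<forall>l>m. x l = 0"
  shows "simplex_map (coface a) m x \<circ> coface a = x"
  using assms by (auto simp: sm_coface fun_eq_iff not_le)

lemma coface_comm: "i < j \<Longrightarrow> coface j \<circ> coface i = coface i \<circ> coface (j - 1)"
  unfolding coface_def by (auto simp: fun_eq_iff)

lemma sm_aff: "simplex_map \<theta> m (comb V t) = (\<lambda>i. \<Sum>v\<in>V. t v * simplex_map \<theta> m v i)"
proof
  fix j
  have "simplex_map \<theta> m (comb V t) j = (\<Sum>l\<le>m. \<Sum>v\<in>V. if \<theta> l = j then t v * v l else 0)"
    unfolding simplex_map_def comb_def by (rule sum.cong) auto
  also have "\<dots> = (\<Sum>v\<in>V. \<Sum>l\<le>m. if \<theta> l = j then t v * v l else 0)"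
    by (rule sum.swap)
  also have "\<dots> = (\<Sum>v\<in>V. t v * simplex_map \<theta> m v j)"
    unfolding simplex_map_def by (rule sum.cong) (auto simp: sum_distrib_left intro!: sum.cong)
  finally show "simplex_map \<theta> m (comb V t) j = (\<Sum>v\<in>V. t v * simplex_map \<theta> m v j)" .
qed

lemma cont_if_coord: "continuous_on S (\<lambda>x::pt. if c then x k else 0)"
  by (cases c) (auto intro: continuous_intros)

lemma sm_cont: "continuous_on S (simplex_map \<theta> m)"
  unfolding simplex_map_def by (intro continuous_on_coordinatewise_then_product continuous_on_sum cont_if_coord)

lemma comp_aff: "(comb V t) \<circ> g = (\<lambda>i. \<Sum>v\<in>V. t v * (v \<circ> g) i)"
  unfolding comb_def by auto

lemma comp_cont: "continuous_on S (\<lambda>x::pt. x \<circ> g)"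
  unfolding o_def by (intro continuous_intros)

lemma pl_map_sm:
  assumes "pl_space P" "pl_space Q" "simplex_map \<theta> m ` P \<subseteq> Q"
  shows "pl_map P Q (simplex_map \<theta> m)"
  by (rule pl_map_affine[OF assms sm_cont sm_aff])

lemma pl_map_comp:
  assumes "pl_space P" "pl_space Q" "(\<lambda>x. x \<circ> g) ` P \<subseteq> Q"
  shows "pl_map P Q (\<lambda>x. x \<circ> g)"
  by (rule pl_map_affine[OF assms comp_cont]) (simp add: comp_aff)

lemma pl_map_id:
  assumes "pl_space P" "pl_space Q" "P \<subseteq> Q"
  shows "pl_map P Q id"
  by (rule pl_map_affine) (use assms in \<open>auto simp: comb_def\<close>)

lemma sface_mono: "finite B \<Longrightarrow> A \<subseteq> B \<Longrightarrow> sface A \<subseteq> sface B"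
proof
  fix x assume B: "finite B" and AB: "A \<subseteq> B" and x: "x \<in> sface A"
  have "sum x B = sum x A"
    by (rule sum.mono_neutral_right) (use B AB x in \<open>auto simp: sface_def\<close>)
  then show "x \<in> sface B" using x AB unfolding sface_def by auto
qed

lemma sface_Int: "finite A \<Longrightarrow> finite B \<Longrightarrow> sface A \<inter> sface B = sface (A \<inter> B)"
proof
  assume A: "finite A" and B: "finite B"
  show "sface A \<inter> sface B \<subseteq> sface (A \<inter> B)"
  proof
    fix x assume x: "x \<in> sface A \<inter> sface B"
    have "sum x A = sum x (A \<inter> B)"
      by (rule sum.mono_neutral_right) (use A x in \<open>auto simp: sface_def\<close>)
    then show "x \<in> sface (A \<inter> B)" using x unfolding sface_def by auto
  qed
  show "sface (A \<inter> B) \<subseteq> sface A \<inter> sface B"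
    using sface_mono[OF A] sface_mono[OF B] by auto
qed

lemma ev_in_sface: "finite S \<Longrightarrow> ev l \<in> sface S \<longleftrightarrow> l \<in> S"
proof -
  assume S: "finite S"
  have "sum (ev l) S = (\<Sum>i\<in>S. if i = l then 1 else 0)" unfolding ev_def by simp
  also have "\<dots> = (if l \<in> S then 1 else 0)" using S by (simp add: sum.delta)
  finally show ?thesis unfolding sface_def by (auto simp: ev_def)
qed

lemma sum_comb:
  assumes "finite S" "finite V" "V \<subseteq> sface S"
  shows "(\<Sum>i\<in>S. comb V t i) = (\<Sum>v\<in>V. t v)"
proof -
  have "(\<Sum>i\<in>S. comb V t i) = (\<Sum>v\<in>V. t v * (\<Sum>i\<in>S. v i))"
    unfolding comb_def by (subst sum.swap) (simp add: sum_distrib_left)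
  also have "\<dots> = (\<Sum>v\<in>V. t v)"
    by (rule sum.cong) (use assms in \<open>auto simp: sface_def\<close>)
  finally show ?thesis .
qed

lemma hull_sub_sface:
  assumes "finite S" "finite V" "V \<subseteq> sface S"
  shows "hull_pts V \<subseteq> sface S"
proof
  fix x assume "x \<in> hull_pts V"
  then obtain t where x: "x = comb V t" and t: "convex_weights V t"
    unfolding hull_pts_def by auto
  have "0 \<le> x i" for i
    unfolding x comb_def using t assms(3) unfolding convex_weights_def sface_def
    by (intro sum_nonneg) auto
  moreover have "x i = 0" if "i \<notin> S" for i
    unfolding x comb_def using that assms(3) unfolding sface_def by (intro sum.neutral) auto
  moreover have "sum x S = 1" using sum_comb[OF assms, of t] t x unfolding convex_weights_def by simp
  ultimately show "x \<in> sface S" unfolding sface_def by auto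
qed

lemma coface_image: "a \<le> Suc m \<Longrightarrow> coface a ` {..m} = {..Suc m} - {a}"
proof -
  assume a: "a \<le> Suc m"
  have "j \<in> coface a ` {..m}" if "j \<le> Suc m" "j \<noteq> a" for j
  proof
    show "j = coface a (cinv a j)" using that by (simp add: coface_cinv)
    show "cinv a j \<in> {..m}" using that a unfolding cinv_def by auto
  qed
  moreover have "coface a l \<le> Suc m" if "l \<le> m" for l using that unfolding coface_def by auto
  ultimately show ?thesis by auto
qed

lemma cinv_image1: "a \<le> Suc m \<Longrightarrow> cinv a ` ({..Suc m} - {a}) = {..m}"
proof -
  assume a: "a \<le> Suc m"
  have "l \<in> cinv a ` ({..Suc m} - {a})" if "l \<le> m" for l
  proof
    show "l = cinv a (coface a l)" by simp
    show "coface a l \<in> {..Suc m} - {a}" using that unfolding coface_def by auto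
  qed
  moreover have "cinv a j \<le> m" if "j \<le> Suc m" "j \<noteq> a" for j
    using that a unfolding cinv_def by auto
  ultimately show ?thesis by auto
qed

lemma cinv_image2: "i < j \<Longrightarrow> j \<le> Suc m \<Longrightarrow> cinv j ` ({..Suc m} - {i, j}) = {..m} - {i}"
proof -
  assume ij: "i < j" "j \<le> Suc m"
  have "l \<in> cinv j ` ({..Suc m} - {i, j})" if "l \<le> m" "l \<noteq> i" for l
  proof
    show "l = cinv j (coface j l)" by simp
    show "coface j l \<in> {..Suc m} - {i, j}" using that ij unfolding coface_def by auto
  qed
  moreover have "cinv j l \<le> m \<and> cinv j l \<noteq> i" if "l \<le> Suc m" "l \<noteq> i" "l \<noteq> j" for l
    using that ij unfolding cinv_def by auto
  ultimately show ?thesis by auto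
qed

lemma inj_on_cinv: "a \<notin> S \<Longrightarrow> inj_on (cinv a) S"
  by (rule inj_on_inverseI[of _ "coface a"]) (metis coface_cinv)

lemma del_sface:
  assumes "a \<notin> S" "x \<in> sface S"
  shows "x \<circ> coface a \<in> sface (cinv a ` S)"
proof -
  have "(\<Sum>l\<in>cinv a ` S. (x \<circ> coface a) l) = (\<Sum>s\<in>S. x (coface a (cinv a s)))"
    by (subst sum.reindex[OF inj_on_cinv[OF assms(1)]]) simp
  also have "\<dots> = sum x S" by (rule sum.cong) (use assms in \<open>metis coface_cinv\<close>)+
  finally have "(\<Sum>l\<in>cinv a ` S. (x \<circ> coface a) l) = 1" using assms unfolding sface_def by simp
  moreover have "x (coface a l) = 0" if "l \<notin> cinv a ` S" for l
  proof -
    have "coface a l \<notin> S" using that by (metis cinv_coface image_eqI)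
    then show ?thesis using assms unfolding sface_def by auto
  qed
  ultimately show ?thesis using assms unfolding sface_def by auto
qed

lemma sm_sface:
  assumes "x \<in> sface T" "T \<subseteq> {..m}"
  shows "simplex_map (coface a) m x \<in> sface (coface a ` T)"
proof -
  let ?y = "simplex_map (coface a) m x"
  have yc: "?y (coface a t) = x t" if "t \<le> m" for t using that by (simp add: sm_coface)
  have "sum ?y (coface a ` T) = sum (?y \<circ> coface a) T"
    by (rule sum.reindex) (meson cinv_coface inj_on_inverseI)
  also have "\<dots> = sum x T" by (rule sum.cong) (use assms yc in auto)
  finally have "sum ?y (coface a ` T) = 1" using assms unfolding sface_def by simp
  moreover have "?y j = 0" if "j \<notin> coface a ` T" for j
  proof (cases "j \<noteq> a \<and> cinv a j \<le> m")
    case True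
    then have "cinv a j \<notin> T" using that coface_cinv by force
    then show ?thesis using True assms by (simp add: sm_coface sface_def)
  qed (auto simp: sm_coface)
  moreover have "0 \<le> ?y j" for j using assms by (simp add: sm_coface sface_def)
  ultimately show ?thesis unfolding sface_def by auto
qed



definition mnf :: "nat \<Rightarrow> nat \<Rightarrow> pt \<Rightarrow> real" where
  "mnf n k x = Min ((\<lambda>i. x i) ` ({..n} - {k}))"

definition rr :: "nat \<Rightarrow> nat \<Rightarrow> pt \<Rightarrow> pt" where
  "rr n k x = (\<lambda>i. if i = k then x k + real n * mnf n k x else if i \<le> n then x i - mnf n k x else x i)"

definition cc :: "nat \<Rightarrow> nat \<Rightarrow> pt" where
  "cc n k = (\<lambda>i. if i \<le> n \<and> i \<noteq> k then 1 / real n else 0)"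

definition RR :: "nat \<Rightarrow> nat \<Rightarrow> nat \<Rightarrow> pt set" where
  "RR n k j = hull_pts (insert (cc n k) (ev ` ({..n} - {j})))"

definition horn :: "nat \<Rightarrow> nat \<Rightarrow> pt set" where
  "horn n k = \<Union> ((\<lambda>i. sface ({..n} - {i})) ` ({..n} - {k}))"

lemma cont_Min_coord:
  assumes "finite A" "A \<noteq> {}"
  shows "continuous_on S (\<lambda>x::pt. Min ((\<lambda>i. x i) ` A))"
  using assms
proof (induction A rule: finite_ne_induct)
  case (singleton a) then show ?case by (simp add: continuous_intros)
next
  case (insert a A)
  have "(\<lambda>x::pt. Min ((\<lambda>i. x i) ` insert a A)) = (\<lambda>x. min (x a) (Min ((\<lambda>i. x i) ` A)))"
    using insert by (auto simp: Min_insert)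
  then show ?case using insert by (auto intro!: continuous_intros)
qed

context
  fixes n k :: nat
  assumes n1: "1 \<le> n" and kn: "k \<le> n"
begin

lemma H_ne: "{..n} - {k} \<noteq> {}"
proof -
  have "(if k = 0 then 1 else 0) \<in> {..n} - {k}" using n1 by auto
  then show ?thesis by blast
qed

lemma card_H: "card ({..n} - {k}) = n"
  using kn by (simp add: card_Diff_singleton)

lemma mnf_le: "i \<in> {..n} - {k} \<Longrightarrow> mnf n k x \<le> x i"
  unfolding mnf_def by (rule Min_le) auto

lemma mnf_ge: "(\<And>i. i \<in> {..n} - {k} \<Longrightarrow> c \<le> x i) \<Longrightarrow> c \<le> mnf n k x"
  unfolding mnf_def using H_ne by (subst Min_ge_iff) auto

lemma mnf_attained: "\<exists>j\<in>{..n} - {k}. x j = mnf n k x"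
proof -
  have "mnf n k x \<in> (\<lambda>i. x i) ` ({..n} - {k})" unfolding mnf_def using H_ne by (intro Min_in) auto
  then show ?thesis by auto
qed

lemma mnf_eqI: "j \<in> {..n} - {k} \<Longrightarrow> (\<And>i. i \<in> {..n} - {k} \<Longrightarrow> x j \<le> x i) \<Longrightarrow> mnf n k x = x j"
  using mnf_le[of j x] mnf_ge[of "x j" x] by auto

lemma rr_cont: "continuous_on S (rr n k)"
proof -
  have c: "continuous_on S (mnf n k)" unfolding mnf_def
    by (rule cont_Min_coord) (use H_ne in auto)
  have "continuous_on S (\<lambda>x. rr n k x i)" for i
    unfolding rr_def using c by (cases "i = k"; cases "i \<le> n") (auto intro!: continuous_intros)
  then show ?thesis by (rule continuous_on_coordinatewise_then_product)
qed

lemma rr_fix: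
  assumes "i \<in> {..n} - {k}" "x \<in> sface ({..n} - {i})"
  shows "rr n k x = x"
proof -
  have "mnf n k x = 0"
    using mnf_le[OF assms(1), of x] mnf_ge[of 0 x] assms unfolding sface_def by force
  then show ?thesis using assms unfolding rr_def sface_def by (auto simp: fun_eq_iff)
qed

lemma rr_fix_horn: "x \<in> horn n k \<Longrightarrow> rr n k x = x"
  unfolding horn_def using rr_fix by auto

lemma rr_maps:
  assumes x: "x \<in> std_simplex n"
  shows "rr n k x \<in> horn n k"
proof -
  obtain j where j: "j \<in> {..n} - {k}" "x j = mnf n k x" using mnf_attained by blast
  have xs: "x \<in> sface {..n}" using x std_simplex_sface by simp
  have m0: "0 \<le> mnf n k x" using xs by (intro mnf_ge) (auto simp: sface_def)
  define g where "g i = (if i = k then real n * mnf n k x else if i \<le> n then - mnf n k x else 0)" for i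
  have rg: "rr n k x i = x i + g i" for i unfolding rr_def g_def by auto
  have "sum g {..n} = g k + sum g ({..n} - {k})" using kn by (simp add: sum.remove)
  also have "sum g ({..n} - {k}) = (\<Sum>i\<in>{..n} - {k}. - mnf n k x)" by (rule sum.cong) (auto simp: g_def)
  finally have "sum g {..n} = 0" using card_H by (simp add: g_def)
  then have s: "sum (rr n k x) {..n} = 1" using xs by (simp add: rg sum.distrib sface_def)
  have "sum (rr n k x) {..n} = rr n k x j + sum (rr n k x) ({..n} - {j})"
    using j by (simp add: sum.remove)
  moreover have "rr n k x j = 0" using j unfolding rr_def by auto
  ultimately have "sum (rr n k x) ({..n} - {j}) = 1" using s by simp
  moreover have "0 \<le> rr n k x i" for i
    using xs m0 mnf_le[of i x] unfolding rr_def sface_def by auto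
  moreover have "rr n k x i = 0" if "i \<notin> {..n} - {j}" for i
    using that j xs kn unfolding rr_def sface_def by auto
  ultimately have "rr n k x \<in> sface ({..n} - {j})" unfolding sface_def by auto
  then show ?thesis unfolding horn_def using j by auto
qed

lemma cc_in: "cc n k \<in> sface {..n}"
proof -
  have "sum (cc n k) {..n} = sum (cc n k) ({..n} - {k}) + cc n k k" using kn
    by (simp add: sum.remove add.commute)
  also have "\<dots> = (\<Sum>i\<in>{..n} - {k}. 1 / real n)" by (simp add: cc_def)
  also have "\<dots> = 1" using card_H n1 by simp
  finally show ?thesis unfolding sface_def cc_def by auto
qed

lemma cc_notin: "j \<in> {..n} - {k} \<Longrightarrow> cc n k \<notin> ev ` ({..n} - {j})"
proof
  assume j: "j \<in> {..n} - {k}" and "cc n k \<in> ev ` ({..n} - {j})"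
  then obtain l where l: "l \<in> {..n} - {j}" "cc n k = ev l" by auto
  then have "cc n k j = ev l j" by simp
  then show False using j l n1 by (auto simp: cc_def ev_def)
qed

lemma comb_R:
  assumes j: "j \<in> {..n} - {k}"
  shows "comb (insert (cc n k) (ev ` ({..n} - {j}))) t =
     (\<lambda>i. t (cc n k) * cc n k i + (if i \<in> {..n} - {j} then t (ev i) else 0))"
proof -
  have "comb (insert (cc n k) (ev ` ({..n} - {j}))) t = (\<lambda>i. t (cc n k) * cc n k i + comb (ev ` ({..n} - {j})) t i)"
    unfolding comb_def using cc_notin[OF j] by (simp add: sum.insert)
  then show ?thesis by (simp add: comb_ev)
qed

lemma R_sub: "j \<in> {..n} - {k} \<Longrightarrow> RR n k j \<subseteq> std_simplex n"
  unfolding RR_def std_simplex_sface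
  by (rule hull_sub_sface) (use cc_in in \<open>auto simp: ev_in_sface\<close>)

lemma rr_cc: "rr n k (cc n k) = ev k"
proof -
  have "mnf n k (cc n k) = 1 / real n"
  proof -
    obtain j where "j \<in> {..n} - {k}" using H_ne by blast
    then show ?thesis by (subst mnf_eqI[of j]) (auto simp: cc_def)
  qed
  then show ?thesis using n1 unfolding rr_def by (auto simp: cc_def ev_def fun_eq_iff)
qed

lemma rr_aff:
  assumes j: "j \<in> {..n} - {k}" and t: "convex_weights (insert (cc n k) (ev ` ({..n} - {j}))) t"
  shows "rr n k (comb (insert (cc n k) (ev ` ({..n} - {j}))) t) =
     (\<lambda>i. \<Sum>v\<in>insert (cc n k) (ev ` ({..n} - {j})). t v * rr n k v i)"
    (is "rr n k (comb ?V t) = _")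
proof -
  let ?x = "comb ?V t"
  have xe: "?x i = t (cc n k) * cc n k i + (if i \<in> {..n} - {j} then t (ev i) else 0)" for i
    using comb_R[OF j] by simp
  have tnn: "0 \<le> t (ev i)" if "i \<in> {..n} - {j}" for i using t that unfolding convex_weights_def by auto
  have mn: "mnf n k ?x = t (cc n k) / real n"
  proof -
    have xe': "?x i = t (cc n k) / real n + (if i \<noteq> j then t (ev i) else 0)" if "i \<in> {..n} - {k}" for i
      unfolding xe using that by (auto simp: cc_def)
    have "mnf n k ?x = ?x j"
      by (rule mnf_eqI[OF j]) (use j tnn in \<open>auto simp: xe'\<close>)
    then show ?thesis using xe'[OF j] by simp
  qed
  have rv: "rr n k (ev l) = ev l" if "l \<in> {..n} - {j}" for l
    by (rule rr_fix[OF j]) (use that in \<open>simp add: ev_in_sface\<close>)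
  have rhs: "(\<Sum>v\<in>?V. t v * rr n k v i) = t (cc n k) * ev k i + (if i \<in> {..n} - {j} then t (ev i) else 0)" for i
  proof -
    have "(\<Sum>v\<in>?V. t v * rr n k v i) = t (cc n k) * ev k i + (\<Sum>v\<in>ev ` ({..n} - {j}). t v * rr n k v i)"
      using cc_notin[OF j] by (simp add: sum.insert rr_cc)
    also have "(\<Sum>v\<in>ev ` ({..n} - {j}). t v * rr n k v i) = comb (ev ` ({..n} - {j})) t i"
      unfolding comb_def by (rule sum.cong) (auto simp: rv)
    finally show ?thesis by (simp add: comb_ev)
  qed
  show ?thesis
  proof
    fix i
    show "rr n k ?x i = (\<Sum>v\<in>?V. t v * rr n k v i)"
      unfolding rhs by (simp only: rr_def mn xe) (use n1 kn j in \<open>auto simp: cc_def ev_def\<close>)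
  qed
qed

lemma R_cover:
  assumes x: "x \<in> std_simplex n"
  shows "\<exists>j\<in>{..n} - {k}. x \<in> RR n k j"
proof -
  obtain j where j: "j \<in> {..n} - {k}" "x j = mnf n k x" using mnf_attained by blast
  have xs: "x \<in> sface {..n}" using x std_simplex_sface by simp
  let ?m = "mnf n k x"
  let ?V = "insert (cc n k) (ev ` ({..n} - {j}))"
  have m0: "0 \<le> ?m" using xs by (intro mnf_ge) (auto simp: sface_def)
  define w where "w l = (if l = k then x k else x l - ?m)" for l
  define t where "t v = (if v = cc n k then real n * ?m else (\<Sum>l\<in>{..n} - {j}. v l * w l))" for v
  have tev: "t (ev l) = w l" if "l \<in> {..n} - {j}" for l
  proof -
    have "ev l \<noteq> cc n k" using cc_notin[OF j(1)] that by (metis imageI)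
    then have "t (ev l) = (\<Sum>l'\<in>{..n} - {j}. ev l l' * w l')"
      unfolding t_def by simp
    also have "\<dots> = (\<Sum>l'\<in>{..n} - {j}. if l' = l then w l else 0)"
      by (rule sum.cong) (auto simp: ev_def)
    finally have "t (ev l) = (\<Sum>l'\<in>{..n} - {j}. if l' = l then w l else 0)" .
    then show ?thesis using that by (simp add: sum.delta')
  qed
  have tc: "t (cc n k) = real n * ?m" unfolding t_def by simp
  have cx: "comb ?V t = x"
  proof
    fix i
    have "comb ?V t i = real n * ?m * cc n k i + (if i \<in> {..n} - {j} then w i else 0)"
      unfolding comb_R[OF j(1)] tc using tev by auto
    then show "comb ?V t i = x i"
      using j n1 xs by (auto simp: cc_def w_def sface_def)
  qed
  have "finite ?V" by simp
  moreover have "?V \<subseteq> sface {..n}" using cc_in by (auto simp: ev_in_sface)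
  ultimately have "sum t ?V = sum x {..n}" using sum_comb[of "{..n}" ?V t] cx by simp
  then have "sum t ?V = 1" using xs by (simp add: sface_def)
  moreover have "\<forall>v\<in>?V. 0 \<le> t v"
    using m0 xs mnf_le[of _ x] by (auto simp: tev tc w_def sface_def)
  ultimately have "convex_weights ?V t" unfolding convex_weights_def by auto
  then have "x \<in> RR n k j" unfolding RR_def hull_pts_def using cx by auto
  then show ?thesis using j by blast
qed

lemma face_sub_horn: "i \<in> {..n} - {k} \<Longrightarrow> sface ({..n} - {i}) \<subseteq> horn n k"
  unfolding horn_def by auto

lemma horn_sub: "horn n k \<subseteq> std_simplex n"
proof -
  have "sface ({..n} - {i}) \<subseteq> sface {..n}" for i by (rule sface_mono) auto
  then show ?thesis unfolding horn_def std_simplex_sface by blast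
qed

lemma pl_space_horn: "pl_space (horn n k)"
proof -
  have A: "\<forall>x\<in>horn n k. \<forall>i\<ge>Suc n. x i = 0"
  proof (intro ballI allI impI)
    fix x i assume "x \<in> horn n k" "Suc n \<le> i"
    moreover have "x \<in> std_simplex n" using horn_sub \<open>x \<in> horn n k\<close> by blast
    ultimately show "x i = 0" unfolding std_simplex_def by auto
  qed
  have B: "polytope_cover (horn n k) ((\<lambda>i. sface ({..n} - {i})) ` ({..n} - {k}))"
    unfolding polytope_cover_def locally_finite_in_def
  proof (intro conjI ballI)
    fix C assume "C \<in> (\<lambda>i. sface ({..n} - {i})) ` ({..n} - {k})"
    then obtain i where "C = sface ({..n} - {i})" by blast
    then have "C = hull_pts (ev ` ({..n} - {i}))" by (simp add: hull_ev)
    then show "\<exists>V. finite V \<and> C = hull_pts V" by (intro exI[of _ "ev ` ({..n} - {i})"]) simp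
  next
    fix x
    have "finite {C \<in> (\<lambda>i. sface ({..n} - {i})) ` ({..n} - {k}). C \<inter> UNIV \<noteq> {}}" by simp
    then show "\<exists>U. open U \<and> x \<in> U \<and> finite {C \<in> (\<lambda>i. sface ({..n} - {i})) ` ({..n} - {k}). C \<inter> U \<noteq> {}}"
      by (intro exI[of _ UNIV]) simp
  next
    show "\<Union> ((\<lambda>i. sface ({..n} - {i})) ` ({..n} - {k})) = horn n k" by (simp add: horn_def)
  qed
  show ?thesis unfolding pl_space_def using A B by (intro conjI exI)
qed

lemma pl_map_rr: "pl_map (std_simplex n) (horn n k) (rr n k)"
  unfolding pl_map_def
proof (intro conjI)
  show "pl_space (std_simplex n)" by (simp add: std_simplex_sface pl_space_sface)
  show "pl_space (horn n k)" by (rule pl_space_horn)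
  show "rr n k ` std_simplex n \<subseteq> horn n k" using rr_maps by auto
  show "continuous_on (std_simplex n) (rr n k)" by (rule rr_cont)
  let ?K = "RR n k ` ({..n} - {k})"
  have "polytope_cover (std_simplex n) ?K"
    unfolding polytope_cover_def locally_finite_in_def
  proof (intro conjI ballI)
    fix C assume "C \<in> ?K"
    then obtain j where "C = RR n k j" by blast
    then show "\<exists>V. finite V \<and> C = hull_pts V" unfolding RR_def
      by (intro exI[of _ "insert (cc n k) (ev ` ({..n} - {j}))"]) simp
  next
    show "\<Union> ?K = std_simplex n" using R_sub R_cover by blast
  next
    fix x
    have "finite {C \<in> ?K. C \<inter> UNIV \<noteq> {}}" by simp
    then show "\<exists>U. open U \<and> x \<in> U \<and> finite {C \<in> ?K. C \<inter> U \<noteq> {}}"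
      by (intro exI[of _ UNIV]) simp
  qed
  moreover have "\<forall>C\<in>?K. \<exists>V. finite V \<and> C = hull_pts V \<and>
           (\<forall>t. convex_weights V t \<longrightarrow> rr n k (comb V t) = (\<lambda>i. \<Sum>v\<in>V. t v * rr n k v i))"
  proof
    fix C assume "C \<in> ?K"
    then obtain j where j: "j \<in> {..n} - {k}" "C = RR n k j" by auto
    show "\<exists>V. finite V \<and> C = hull_pts V \<and>
           (\<forall>t. convex_weights V t \<longrightarrow> rr n k (comb V t) = (\<lambda>i. \<Sum>v\<in>V. t v * rr n k v i))"
      using j(2) rr_aff[OF j(1)] unfolding RR_def
      by (intro exI[of _ "insert (cc n k) (ev ` ({..n} - {j}))"]) simp
  qed
  ultimately show "\<exists>K. polytope_cover (std_simplex n) K \<and>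
     (\<forall>C\<in>K. \<exists>V. finite V \<and> C = hull_pts V \<and>
           (\<forall>t. convex_weights V t \<longrightarrow> rr n k (comb V t) = (\<lambda>i. \<Sum>v\<in>V. t v * rr n k v i)))"
    by (intro exI[of _ ?K]) simp
qed

lemma face_closed:
  assumes i: "i \<in> {..n} - {k}"
  shows "closedin (top_of_set (horn n k)) (sface ({..n} - {i}))"
proof -
  have "sface ({..n} - {i}) = horn n k \<inter> {x. x i = 0}"
  proof
    show "sface ({..n} - {i}) \<subseteq> horn n k \<inter> {x. x i = 0}"
      using face_sub_horn[OF i] unfolding sface_def by auto
    show "horn n k \<inter> {x. x i = 0} \<subseteq> sface ({..n} - {i})"
    proof
      fix x assume x: "x \<in> horn n k \<inter> {x. x i = 0}"
      then have xs: "x \<in> sface {..n}" using horn_sub std_simplex_sface by auto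
      have "sum x {..n} = x i + sum x ({..n} - {i})" using i by (simp add: sum.remove)
      then show "x \<in> sface ({..n} - {i})" using x xs unfolding sface_def by auto
    qed
  qed
  moreover have "closed {x::pt. x i = 0}"
    by (rule closed_Collect_eq) (auto intro: continuous_intros)
  ultimately show ?thesis by (simp add: closedin_closed_Int)
qed

end


lemma qp_pre: "quasi_pl_space Fo Fm \<Longrightarrow> presheaf Fo Fm"
  unfolding quasi_pl_space_def by (rule conjunct1)

lemma qp_P1: "quasi_pl_space Fo Fm \<Longrightarrow> pl_map P Q f \<Longrightarrow> z \<in> Fo Q \<Longrightarrow> Fm P Q f z \<in> Fo P"
  by (drule qp_pre) (unfold presheaf_def, elim conjE, erule allE, erule allE, erule allE, erule impE, assumption, erule bspec)

lemma qp_P2: "quasi_pl_space Fo Fm \<Longrightarrow> pl_map P Q f \<Longrightarrow> (\<And>x. x \<in> P \<Longrightarrow> f x = g x) \<Longrightarrow> z \<in> Fo Q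
   \<Longrightarrow> Fm P Q f z = Fm P Q g z"
proof -
  assume a: "quasi_pl_space Fo Fm" "pl_map P Q f" "\<And>x. x \<in> P \<Longrightarrow> f x = g x" "z \<in> Fo Q"
  have "\<forall>P Q f g. pl_map P Q f \<and> (\<forall>x\<in>P. f x = g x) \<longrightarrow> (\<forall>y\<in>Fo Q. Fm P Q f y = Fm P Q g y)"
    using qp_pre[OF a(1)] unfolding presheaf_def by (elim conjE)
  then show ?thesis using a(2-4) by simp
qed

lemma qp_P3: "quasi_pl_space Fo Fm \<Longrightarrow> pl_space P \<Longrightarrow> z \<in> Fo P \<Longrightarrow> Fm P P id z = z"
proof -
  assume a: "quasi_pl_space Fo Fm" "pl_space P" "z \<in> Fo P"
  have "\<forall>P. pl_space P \<longrightarrow> (\<forall>x\<in>Fo P. Fm P P id x = x)"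
    using qp_pre[OF a(1)] unfolding presheaf_def by (elim conjE)
  then show ?thesis using a(2-3) by simp
qed

lemma qp_P4: "quasi_pl_space Fo Fm \<Longrightarrow> pl_map P Q f \<Longrightarrow> pl_map Q R g \<Longrightarrow> z \<in> Fo R
   \<Longrightarrow> Fm P R (g \<circ> f) z = Fm P Q f (Fm Q R g z)"
proof -
  assume a: "quasi_pl_space Fo Fm" "pl_map P Q f" "pl_map Q R g" "z \<in> Fo R"
  have "\<forall>P Q R f g. pl_map P Q f \<and> pl_map Q R g \<longrightarrow>
        (\<forall>x\<in>Fo R. Fm P R (g \<circ> f) x = Fm P Q f (Fm Q R g x))"
    using qp_pre[OF a(1)] unfolding presheaf_def by (elim conjE)
  then show ?thesis using a(2-4) by simp
qed

lemma qp_EQ: "quasi_pl_space Fo Fm \<Longrightarrow> pl_space P \<Longrightarrow> (\<And>C. C \<in> \<C> \<Longrightarrow> closedin (top_of_set P) C \<and> pl_space C)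
   \<Longrightarrow> \<Union>\<C> = P \<Longrightarrow> locally_finite_in P \<C> \<Longrightarrow> equalizer_cond Fo Fm P \<C>"
proof -
  assume a: "quasi_pl_space Fo Fm" "pl_space P" "\<And>C. C \<in> \<C> \<Longrightarrow> closedin (top_of_set P) C \<and> pl_space C"
     "\<Union>\<C> = P" "locally_finite_in P \<C>"
  have "\<forall>P \<C>. pl_space P \<and> (\<forall>C\<in>\<C>. closedin (top_of_set P) C \<and> pl_space C) \<and> \<Union>\<C> = P
          \<and> locally_finite_in P \<C> \<longrightarrow> equalizer_cond Fo Fm P \<C>"
    using a(1) unfolding quasi_pl_space_def by (elim conjE)
  then show ?thesis using a(2-5) by (metis a(4))
qed

lemma sm_face_img: "a \<le> Suc p \<Longrightarrow> simplex_map (coface a) p ` std_simplex p \<subseteq> sface ({..Suc p} - {a})"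
  using sm_sface[of _ "{..p}" p a] coface_image[of a p] by (auto simp: std_simplex_sface)

lemma sm_img: "a \<le> Suc p \<Longrightarrow> simplex_map (coface a) p ` std_simplex p \<subseteq> std_simplex (Suc p)"
  using sm_face_img[of a p] sface_mono[of "{..Suc p}" "{..Suc p} - {a}"] by (auto simp: std_simplex_sface)

lemma del_face_img: "a \<le> Suc p \<Longrightarrow> (\<lambda>z. z \<circ> coface a) ` sface ({..Suc p} - {a}) \<subseteq> std_simplex p"
  using del_sface[of a "{..Suc p} - {a}"] cinv_image1[of a p] by (auto simp: std_simplex_sface)

lemma pl_std: "pl_space (std_simplex p)"
  by (simp add: std_simplex_sface pl_space_sface)

lemma pl_face: "pl_space (sface ({..n} - A))"
  by (simp add: pl_space_sface)

lemma sface_inj: "i \<le> n \<Longrightarrow> i' \<le> n \<Longrightarrow> sface ({..n} - {i}) = sface ({..n} - {i'}) \<Longrightarrow> i = i'"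
proof (rule ccontr)
  assume a: "i \<le> n" "i' \<le> n" "sface ({..n} - {i}) = sface ({..n} - {i'})" "i \<noteq> i'"
  have "ev i \<in> sface ({..n} - {i'})" using a by (simp add: ev_in_sface)
  moreover have "ev i \<notin> sface ({..n} - {i})" by (simp add: ev_in_sface)
  ultimately show False using a(3) by simp
qed


lemma compat_side:
  assumes qp: "quasi_pl_space Fo Fm"
    and a: "a \<le> Suc (Suc p)" and b: "b \<le> Suc p"
    and G: "G \<subseteq> sface ({..Suc (Suc p)} - {a})" "pl_space G"
    and qimg: "(\<lambda>z. z \<circ> g) ` G \<subseteq> std_simplex p"
    and agree: "\<And>z. z \<in> G \<Longrightarrow> z \<circ> coface a = simplex_map (coface b) p (z \<circ> g)"
    and xa: "xa \<in> Fo (std_simplex (Suc p))"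
  shows "restr Fm G (sface ({..Suc (Suc p)} - {a})) (Fm (sface ({..Suc (Suc p)} - {a})) (std_simplex (Suc p)) (\<lambda>z. z \<circ> coface a) xa)
     = Fm G (std_simplex p) (\<lambda>z. z \<circ> g) (Fm (std_simplex p) (std_simplex (Suc p)) (simplex_map (coface b) p) xa)"
proof -
  let ?F = "sface ({..Suc (Suc p)} - {a})"
  have m1: "pl_map G ?F id" by (rule pl_map_id) (use G in \<open>auto simp: pl_face\<close>)
  have m2: "pl_map ?F (std_simplex (Suc p)) (\<lambda>z. z \<circ> coface a)"
    by (rule pl_map_comp) (use del_face_img[OF a] in \<open>auto simp: pl_face pl_std\<close>)
  have m3: "pl_map G (std_simplex (Suc p)) (\<lambda>z. z \<circ> coface a)"
    by (rule pl_map_comp) (use del_face_img[OF a] G in \<open>auto simp: pl_std\<close>)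
  have m4: "pl_map G (std_simplex p) (\<lambda>z. z \<circ> g)"
    by (rule pl_map_comp) (use qimg G in \<open>auto simp: pl_std\<close>)
  have m5: "pl_map (std_simplex p) (std_simplex (Suc p)) (simplex_map (coface b) p)"
    by (rule pl_map_sm) (use sm_img[OF b] in \<open>auto simp: pl_std\<close>)
  have "restr Fm G ?F (Fm ?F (std_simplex (Suc p)) (\<lambda>z. z \<circ> coface a) xa)
      = Fm G (std_simplex (Suc p)) ((\<lambda>z. z \<circ> coface a) \<circ> id) xa"
    unfolding restr_def by (rule qp_P4[OF qp m1 m2 xa, symmetric])
  also have "\<dots> = Fm G (std_simplex (Suc p)) (\<lambda>z. z \<circ> coface a) xa" by simp
  also have "\<dots> = Fm G (std_simplex (Suc p)) (simplex_map (coface b) p \<circ> (\<lambda>z. z \<circ> g)) xa"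
    by (rule qp_P2[OF qp m3 _ xa]) (simp add: agree)
  also have "\<dots> = Fm G (std_simplex p) (\<lambda>z. z \<circ> g) (Fm (std_simplex p) (std_simplex (Suc p)) (simplex_map (coface b) p) xa)"
    by (rule qp_P4[OF qp m4 m5 xa])
  finally show ?thesis .
qed

lemma compat:
  assumes qp: "quasi_pl_space Fo Fm"
    and ij: "i < j" "j \<le> Suc (Suc p)"
    and xi: "xi \<in> Fo (std_simplex (Suc p))" and xj: "xj \<in> Fo (std_simplex (Suc p))"
    and hyp: "Fm (std_simplex p) (std_simplex (Suc p)) (simplex_map (coface i) p) xj
            = Fm (std_simplex p) (std_simplex (Suc p)) (simplex_map (coface (j - 1)) p) xi"
  shows "restr Fm (sface ({..Suc (Suc p)} - {i}) \<inter> sface ({..Suc (Suc p)} - {j})) (sface ({..Suc (Suc p)} - {i}))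
            (Fm (sface ({..Suc (Suc p)} - {i})) (std_simplex (Suc p)) (\<lambda>z. z \<circ> coface i) xi)
       = restr Fm (sface ({..Suc (Suc p)} - {i}) \<inter> sface ({..Suc (Suc p)} - {j})) (sface ({..Suc (Suc p)} - {j}))
            (Fm (sface ({..Suc (Suc p)} - {j})) (std_simplex (Suc p)) (\<lambda>z. z \<circ> coface j) xj)"
proof -
  let ?N = "Suc (Suc p)"
  let ?G = "sface ({..?N} - {i}) \<inter> sface ({..?N} - {j})"
  let ?g = "coface j \<circ> coface i"
  have Geq: "?G = sface ({..?N} - {i, j})"
  proof -
    have "({..?N} - {i}) \<inter> ({..?N} - {j}) = {..?N} - {i, j}" by auto
    then show ?thesis by (simp add: sface_Int)
  qed
  have plG: "pl_space ?G" unfolding Geq by (rule pl_space_sface) simp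
  have qimg: "(\<lambda>z. z \<circ> ?g) ` ?G \<subseteq> std_simplex p"
  proof
    fix w assume "w \<in> (\<lambda>z. z \<circ> ?g) ` ?G"
    then obtain z where z: "z \<in> sface ({..?N} - {i, j})" and w: "w = z \<circ> ?g" using Geq by auto
    have "z \<circ> coface j \<in> sface (cinv j ` ({..?N} - {i, j}))" by (rule del_sface) (use z in auto)
    then have "z \<circ> coface j \<in> sface ({..Suc p} - {i})" using cinv_image2[OF ij] by simp
    then have "z \<circ> coface j \<circ> coface i \<in> sface (cinv i ` ({..Suc p} - {i}))" by (rule del_sface[rotated]) simp
    then show "w \<in> std_simplex p" using cinv_image1[of i p] ij by (simp add: w std_simplex_sface o_assoc)
  qed
  have zG: "z i = 0" "z j = 0" "\<And>l. l > ?N \<Longrightarrow> z l = 0" if "z \<in> ?G" for z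
    using that unfolding sface_def by auto
  have L: "restr Fm ?G (sface ({..?N} - {i})) (Fm (sface ({..?N} - {i})) (std_simplex (Suc p)) (\<lambda>z. z \<circ> coface i) xi)
     = Fm ?G (std_simplex p) (\<lambda>z. z \<circ> ?g) (Fm (std_simplex p) (std_simplex (Suc p)) (simplex_map (coface (j - 1)) p) xi)"
  proof (rule compat_side[OF qp _ _ _ plG qimg _ xi])
    show "i \<le> ?N" "j - 1 \<le> Suc p" using ij by auto
    show "?G \<subseteq> sface ({..?N} - {i})" by auto
    fix z assume z: "z \<in> ?G"
    have "z \<circ> ?g = (z \<circ> coface i) \<circ> coface (j - 1)" using coface_comm[OF ij(1)] by (simp add: o_assoc)
    moreover have "simplex_map (coface (j - 1)) p ((z \<circ> coface i) \<circ> coface (j - 1)) = z \<circ> coface i"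
    proof (rule sm_del)
      show "(z \<circ> coface i) (j - 1) = 0" using zG[OF z] ij unfolding coface_def by auto
      show "\<forall>l>Suc p. (z \<circ> coface i) l = 0" using zG[OF z] ij unfolding coface_def by auto
      show "j - 1 \<le> Suc p" using ij by auto
    qed
    ultimately show "z \<circ> coface i = simplex_map (coface (j - 1)) p (z \<circ> ?g)" by simp
  qed
  have R: "restr Fm ?G (sface ({..?N} - {j})) (Fm (sface ({..?N} - {j})) (std_simplex (Suc p)) (\<lambda>z. z \<circ> coface j) xj)
     = Fm ?G (std_simplex p) (\<lambda>z. z \<circ> ?g) (Fm (std_simplex p) (std_simplex (Suc p)) (simplex_map (coface i) p) xj)"
  proof (rule compat_side[OF qp _ _ _ plG qimg _ xj])
    show "j \<le> ?N" "i \<le> Suc p" using ij by auto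
    show "?G \<subseteq> sface ({..?N} - {j})" by auto
    fix z assume z: "z \<in> ?G"
    have "z \<circ> ?g = (z \<circ> coface j) \<circ> coface i" by (simp add: o_assoc)
    moreover have "simplex_map (coface i) p ((z \<circ> coface j) \<circ> coface i) = z \<circ> coface j"
    proof (rule sm_del)
      show "(z \<circ> coface j) i = 0" using zG[OF z] ij unfolding coface_def by auto
      show "\<forall>l>Suc p. (z \<circ> coface j) l = 0" using zG[OF z] ij unfolding coface_def by auto
      show "i \<le> Suc p" using ij by auto
    qed
    ultimately show "z \<circ> coface j = simplex_map (coface i) p (z \<circ> ?g)" by simp
  qed
  show ?thesis using L R hyp by simp
qed


theorem proposition2p10:
  fixes Fo :: "pt set \<Rightarrow> 'a set"
    and Fm :: "pt set \<Rightarrow> pt set \<Rightarrow> (pt \<Rightarrow> pt) \<Rightarrow> 'a \<Rightarrow> 'a"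
  assumes "quasi_pl_space Fo Fm"
  shows "kan_complex (sset_obj Fo) (sset_op Fm)"
  unfolding kan_complex_def
proof (intro allI impI)
  note qp = assms
  fix n k x
  assume h: "1 \<le> n \<and> k \<le> n \<and>
        (\<forall>i\<le>n. i \<noteq> k \<longrightarrow> x i \<in> sset_obj Fo (n - 1)) \<and>
        (\<forall>i j. i < j \<and> j \<le> n \<and> i \<noteq> k \<and> j \<noteq> k \<longrightarrow>
            sset_op Fm (coface i) (n - 2) (n - 1) (x j) = sset_op Fm (coface (j - 1)) (n - 2) (n - 1) (x i))"
  have n1: "1 \<le> n" and kn: "k \<le> n" using h by auto
  obtain m where nm: "n = Suc m" using n1 by (cases n) auto
  have xin: "x i \<in> Fo (std_simplex m)" if "i \<le> n" "i \<noteq> k" for i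
    using h that nm by (auto simp: sset_obj_def)
  define F where "F i = sface ({..n} - {i})" for i
  define H where "H = {..n} - {k}"
  have hornF: "horn n k = \<Union> (F ` H)" unfolding horn_def F_def H_def by simp
  define ix where "ix C = (THE i. i \<in> H \<and> C = F i)" for C
  have ixF: "ix (F i) = i" if "i \<in> H" for i
    unfolding ix_def
    by (rule the_equality) (use that sface_inj in \<open>auto simp: H_def F_def\<close>)
  define \<sigma> where "\<sigma> C = Fm C (std_simplex m) (\<lambda>z. z \<circ> coface (ix C)) (x (ix C))" for C
  have \<sigma>F: "\<sigma> (F i) = Fm (F i) (std_simplex m) (\<lambda>z. z \<circ> coface i) (x i)" if "i \<in> H" for i
    unfolding \<sigma>_def ixF[OF that] ..
  have pmi: "pl_map (F i) (std_simplex m) (\<lambda>z. z \<circ> coface i)" if "i \<le> n" for i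
    by (rule pl_map_comp) (use del_face_img[of i m] that nm in \<open>auto simp: F_def pl_face pl_std\<close>)
  have EQ: "equalizer_cond Fo Fm (horn n k) (F ` H)"
  proof (rule qp_EQ[OF qp pl_space_horn[OF n1 kn]])
    fix C assume "C \<in> F ` H"
    then show "closedin (top_of_set (horn n k)) C \<and> pl_space C"
      using face_closed[OF n1 kn] by (auto simp: F_def H_def pl_face)
  next
    show "\<Union> (F ` H) = horn n k" using hornF by simp
  next
    show "locally_finite_in (horn n k) (F ` H)"
      unfolding locally_finite_in_def
    proof
      fix z
      have "finite {C \<in> F ` H. C \<inter> UNIV \<noteq> {}}" by (simp add: H_def)
      then show "\<exists>U. open U \<and> z \<in> U \<and> finite {C \<in> F ` H. C \<inter> U \<noteq> {}}"
        by (intro exI[of _ UNIV]) simp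
    qed
  qed
  have \<sigma>in: "\<forall>C\<in>F ` H. \<sigma> C \<in> Fo C"
  proof
    fix C assume "C \<in> F ` H"
    then obtain i where i: "i \<in> H" "C = F i" by auto
    show "\<sigma> C \<in> Fo C" unfolding i(2) \<sigma>F[OF i(1)]
      by (rule qp_P1[OF qp pmi xin]) (use i in \<open>auto simp: H_def\<close>)
  qed
  have cp: "restr Fm (F i \<inter> F j) (F i) (\<sigma> (F i)) = restr Fm (F i \<inter> F j) (F j) (\<sigma> (F j))"
    if ij: "i \<in> H" "j \<in> H" "i < j" for i j
  proof -
    obtain p where mp: "m = Suc p"
    proof (cases m)
      case 0
      then show ?thesis using ij nm kn by (auto simp: H_def)
    qed
    have n2: "n - 2 = p" "n - 1 = Suc p" "n = Suc (Suc p)" using nm mp by auto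
    have hyp: "Fm (std_simplex p) (std_simplex (Suc p)) (simplex_map (coface i) p) (x j)
            = Fm (std_simplex p) (std_simplex (Suc p)) (simplex_map (coface (j - 1)) p) (x i)"
      using h ij n2 by (auto simp: H_def sset_op_def)
    have "restr Fm (F i \<inter> F j) (F i) (Fm (F i) (std_simplex (Suc p)) (\<lambda>z. z \<circ> coface i) (x i))
       = restr Fm (F i \<inter> F j) (F j) (Fm (F j) (std_simplex (Suc p)) (\<lambda>z. z \<circ> coface j) (x j))"
      unfolding F_def n2(3)
      by (rule compat[OF qp ij(3) _ _ _ hyp]) (use ij xin n2 mp in \<open>auto simp: H_def\<close>)
    then show ?thesis using \<sigma>F ij mp by simp
  qed
  have compat_all: "\<forall>C\<in>F ` H. \<forall>D\<in>F ` H. restr Fm (C \<inter> D) C (\<sigma> C) = restr Fm (C \<inter> D) D (\<sigma> D)"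
  proof (intro ballI)
    fix C D assume "C \<in> F ` H" "D \<in> F ` H"
    then obtain i j where i: "i \<in> H" "C = F i" and j: "j \<in> H" "D = F j" by auto
    consider "i = j" | "i < j" | "j < i" by linarith
    then show "restr Fm (C \<inter> D) C (\<sigma> C) = restr Fm (C \<inter> D) D (\<sigma> D)"
    proof cases
      case 1 then show ?thesis using i j by simp
    next
      case 2 then show ?thesis using i j cp by simp
    next
      case 3 then show ?thesis using i j cp[of j i] by (simp add: Int_commute)
    qed
  qed
  obtain s where s: "s \<in> Fo (horn n k)" "\<forall>C\<in>F ` H. restr Fm C (horn n k) s = \<sigma> C"
    using EQ \<sigma>in compat_all unfolding equalizer_cond_def by blast
  define y where "y = Fm (std_simplex n) (horn n k) (rr n k) s"
  have prr: "pl_map (std_simplex n) (horn n k) (rr n k)" by (rule pl_map_rr[OF n1 kn])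
  have yin: "y \<in> sset_obj Fo n" unfolding y_def sset_obj_def by (rule qp_P1[OF qp prr s(1)])
  have "sset_op Fm (coface i) (n - 1) n y = x i" if i: "i \<le> n" "i \<noteq> k" for i
  proof -
    have iH: "i \<in> H" using i by (simp add: H_def)
    let ?D = "simplex_map (coface i) m"
    have Dimg: "?D ` std_simplex m \<subseteq> F i" using sm_face_img[of i m] i nm by (simp add: F_def)
    have FL: "F i \<subseteq> horn n k" using face_sub_horn[OF n1 kn, of i] iH by (simp add: F_def H_def)
    have plF: "pl_space (F i)" by (simp add: F_def pl_face)
    have plL: "pl_space (horn n k)" by (rule pl_space_horn[OF n1 kn])
    have mD1: "pl_map (std_simplex m) (std_simplex n) ?D"
      by (rule pl_map_sm) (use sm_img[of i m] i nm in \<open>auto simp: pl_std\<close>)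
    have mD2: "pl_map (std_simplex m) (horn n k) ?D"
      by (rule pl_map_sm) (use Dimg FL plL in \<open>auto simp: pl_std\<close>)
    have mD3: "pl_map (std_simplex m) (F i) ?D"
      by (rule pl_map_sm) (use Dimg plF in \<open>auto simp: pl_std\<close>)
    have mI: "pl_map (F i) (horn n k) id" by (rule pl_map_id[OF plF plL FL])
    have mId: "pl_map (std_simplex m) (std_simplex m) id" by (rule pl_map_id) (auto simp: pl_std)
    have xi: "x i \<in> Fo (std_simplex m)" by (rule xin[OF i])
    have "sset_op Fm (coface i) (n - 1) n y = Fm (std_simplex m) (std_simplex n) ?D y"
      by (simp add: sset_op_def nm)
    also have "\<dots> = Fm (std_simplex m) (horn n k) (rr n k \<circ> ?D) s"
      unfolding y_def by (rule qp_P4[OF qp mD1 prr s(1), symmetric])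
    also have "\<dots> = Fm (std_simplex m) (horn n k) ?D s"
    proof (rule qp_P2[OF qp mD2 _ s(1), symmetric])
      fix z assume "z \<in> std_simplex m"
      then have "?D z \<in> horn n k" using Dimg FL by auto
      then show "?D z = (rr n k \<circ> ?D) z" using rr_fix_horn[OF n1 kn] by simp
    qed
    also have "\<dots> = Fm (std_simplex m) (horn n k) (id \<circ> ?D) s" by simp
    also have "\<dots> = Fm (std_simplex m) (F i) ?D (Fm (F i) (horn n k) id s)"
      by (rule qp_P4[OF qp mD3 mI s(1)])
    also have "Fm (F i) (horn n k) id s = \<sigma> (F i)"
      using s(2) iH unfolding restr_def by auto
    also have "\<sigma> (F i) = Fm (F i) (std_simplex m) (\<lambda>z. z \<circ> coface i) (x i)" by (rule \<sigma>F[OF iH])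
    also have "Fm (std_simplex m) (F i) ?D \<dots> = Fm (std_simplex m) (std_simplex m) ((\<lambda>z. z \<circ> coface i) \<circ> ?D) (x i)"
      by (rule qp_P4[OF qp mD3 pmi[OF i(1)] xi, symmetric])
    also have "\<dots> = Fm (std_simplex m) (std_simplex m) id (x i)"
    proof (rule qp_P2[OF qp mId _ xi, symmetric])
      fix z assume "z \<in> std_simplex m"
      then have "\<forall>l>m. z l = 0" by (simp add: std_simplex_def)
      then show "id z = ((\<lambda>z. z \<circ> coface i) \<circ> ?D) z" by (simp add: del_sm)
    qed
    also have "\<dots> = x i" by (rule qp_P3[OF qp pl_std xi])
    finally show ?thesis .
  qed
  then show "\<exists>y\<in>sset_obj Fo n. \<forall>i\<le>n. i \<noteq> k \<longrightarrow> sset_op Fm (coface i) (n - 1) n y = x i"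
    using yin by blast
qed

end
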